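(* Let $V$ be a finite set, let $t,q$ be positive integers, and let $N=(t!)^2\cdot q^{t+1}$. Let $\mathbf{x}_1,\dots,\mathbf{x}_N\in V^t$ be vectors each of which has pairwise distinct entries. Then there exist indices $i_1<\dots<i_q$ such that, writing $\mathbf{y}_k=\mathbf{x}_{i_k}$ for $k=1,\dots,q$: (1) for each $j=1,\dots,t$, the entries $(\mathbf{y}_1)_j,\dots,(\mathbf{y}_q)_j$ are either all equal or pairwise distinct; and (2) the sets $Y_1,\dots,Y_t$ are pairwise disjoint, where $Y_j=\{(\mathbf{y}_1)_j,\dots,(\mathbf{y}_q)_j\}$.
   Context: For a vector $\mathbf{x}\in V^t$, $(\mathbf{x})_j$ denotes its $j$-th entry. *)

theory Defs
  imports Main
begin

end

theory Submission
  imports Defs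
begin

definition good :: "(nat \<Rightarrow> nat \<Rightarrow> 'a) \<Rightarrow> nat set \<Rightarrow> nat set \<Rightarrow> bool" where
 "good x J S \<longleftrightarrow> (\<forall>j\<in>J. (\<forall>k\<in>S. \<forall>l\<in>S. x k j = x l j) \<or> inj_on (\<lambda>k. x k j) S) \<and>
    (\<forall>j\<in>J. \<forall>j'\<in>J. j \<noteq> j' \<longrightarrow> (\<lambda>k. x k j) ` S \<inter> (\<lambda>k. x k j') ` S = {})"

definition disj :: "(nat \<Rightarrow> nat \<Rightarrow> 'a) \<Rightarrow> nat set \<Rightarrow> nat set \<Rightarrow> bool" where
 "disj x J D \<longleftrightarrow> (\<forall>k\<in>D. \<forall>l\<in>D. k \<noteq> l \<longrightarrow> x k ` J \<inter> x l ` J = {})"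

lemma disj_good:
  assumes "disj x J S" "\<forall>i\<in>S. inj_on (x i) J"
  shows "good x J S"
  unfolding good_def
proof (intro conjI ballI impI)
  fix j assume "j \<in> J"
  show "(\<forall>k\<in>S. \<forall>l\<in>S. x k j = x l j) \<or> inj_on (\<lambda>k. x k j) S"
  proof (rule disjI2, rule inj_onI)
    fix k l assume "k \<in> S" "l \<in> S" "x k j = x l j"
    show "k = l"
    proof (rule ccontr)
      assume "k \<noteq> l"
      hence "x k ` J \<inter> x l ` J = {}" using assms(1) \<open>k \<in> S\<close> \<open>l \<in> S\<close> unfolding disj_def by blast
      moreover have "x k j \<in> x k ` J \<inter> x l ` J" using \<open>j \<in> J\<close> \<open>x k j = x l j\<close> by (metis IntI imageI)
      ultimately show False by blast
    qed
  qed
next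
  fix j j' assume "j \<in> J" "j' \<in> J" "j \<noteq> j'"
  show "(\<lambda>k. x k j) ` S \<inter> (\<lambda>k. x k j') ` S = {}"
  proof (rule ccontr)
  assume "(\<lambda>k. x k j) ` S \<inter> (\<lambda>k. x k j') ` S \<noteq> {}"
  then obtain k l where "k \<in> S" "l \<in> S" "x k j = x l j'" by blast
  show False
  proof (cases "k = l")
    case True
    have "inj_on (x k) J" using assms(2) \<open>k \<in> S\<close> by blast
    then have "j = j'" using True \<open>j \<in> J\<close> \<open>j' \<in> J\<close> \<open>x k j = x l j'\<close> by (metis inj_onD)
    then show ?thesis using \<open>j \<noteq> j'\<close> by simp
  next
    case False
    hence "x k ` J \<inter> x l ` J = {}" using assms(1) \<open>k \<in> S\<close> \<open>l \<in> S\<close> unfolding disj_def by blast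
    moreover have "x k j \<in> x k ` J" using \<open>j \<in> J\<close> by simp
    moreover have "x k j \<in> x l ` J" using \<open>j' \<in> J\<close> \<open>x k j = x l j'\<close> by simp
    ultimately show ?thesis by blast
  qed
  qed
qed

lemma pigeon:
  assumes "finite B" "f ` I \<subseteq> B" "finite I" "card I > card B * m"
  shows "\<exists>b\<in>B. card {i\<in>I. f i = b} > m"
proof (rule ccontr)
  assume "\<not> ?thesis"
  hence le: "\<forall>b\<in>B. card {i\<in>I. f i = b} \<le> m" by auto
  have eq: "I = (\<Union>b\<in>B. {i\<in>I. f i = b})" using assms(2) by auto
  have "card I = card (\<Union>b\<in>B. {i\<in>I. f i = b})" using eq by (rule arg_cong)
  also have "\<dots> \<le> (\<Sum>b\<in>B. card {i\<in>I. f i = b})" by (rule card_UN_le[OF assms(1)])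
  also have "\<dots> \<le> (\<Sum>b\<in>B. m)" using le by (intro sum_mono) blast
  also have "\<dots> = card B * m" by simp
  finally show False using assms(4) by linarith
qed

lemma arith:
  fixes q n c h :: nat
  assumes "q > 0" "c \<le> (q - 1) * (n+1) * (n+1)" "h > 0"
  shows "c * (h - 1) < q * ((n+1)*(n+1)) * h"
proof -
  have "c * (h - 1) \<le> (q - 1) * (n+1) * (n+1) * (h - 1)" using assms(2) by simp
  also have "\<dots> \<le> (q - 1) * (n+1) * (n+1) * h" by (rule mult_le_mono2) simp
  also have "\<dots> = (q - 1) * ((n+1) * (n+1)) * h" by (simp only: mult.assoc)
  also have "\<dots> < q * ((n+1)*(n+1)) * h"
  proof -
    have "(q - 1) * ((n+1)*(n+1)) < q * ((n+1)*(n+1))" using assms(1) by (intro mult_less_mono1) auto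
    then show ?thesis using assms(3) by (rule mult_less_mono1)
  qed
  finally show ?thesis .
qed


lemma main:
  fixes x :: "nat \<Rightarrow> nat \<Rightarrow> 'a" and q :: nat
  assumes q: "q > 0"
  shows "finite J \<Longrightarrow> card J = n \<Longrightarrow> finite I \<Longrightarrow> q^(n+1) * (fact n)^2 \<le> card I
    \<Longrightarrow> \<forall>i\<in>I. inj_on (x i) J \<Longrightarrow> \<exists>S\<subseteq>I. card S = q \<and> good x J S"
proof (induction n arbitrary: J I)
  case 0
  then have "J = {}" by simp
  from 0 have "q \<le> card I" by simp
  then obtain S where "S \<subseteq> I" "card S = q" "finite S" by (rule obtain_subset_with_card_n)
  moreover have "good x J S" using \<open>J={}\<close> unfolding good_def by simp
  ultimately show ?case by blast
next
  case (Suc n)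
  note fJ = Suc.prems(1) and cJ = Suc.prems(2) and fI = Suc.prems(3) and cI = Suc.prems(4)
    and inj = Suc.prems(5)
  define h where "h = q^(n+1) * (fact n)^2"
  have hpos: "h > 0" using q by (simp add: h_def)
  have cI': "q * ((n+1)*(n+1)) * h \<le> card I"
  proof -
    have "(q::nat)^(Suc n + 1) * (fact (Suc n))^2 = q * ((n+1)*(n+1)) * h"
      by (simp add: h_def power2_eq_square fact_Suc algebra_simps)
    then show ?thesis using cI by simp
  qed
  have Jne: "J \<noteq> {}" using cJ by auto
  let ?P = "\<lambda>D. D \<subseteq> I \<and> disj x J D"
  have "\<exists>D. ?P D \<and> (\<forall>D'. ?P D' \<longrightarrow> card D' \<le> card D)"
  proof (rule Lattices_Big.ex_has_greatest_nat[of ?P "{}" card "card I + 1"])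
    show "?P {}" by (simp add: disj_def)
    show "\<forall>y. ?P y \<longrightarrow> card y < card I + 1" using fI by (simp add: card_mono le_imp_less_Suc)
  qed
  then obtain D where PD: "?P D" and Dmax: "\<forall>D'. ?P D' \<longrightarrow> card D' \<le> card D" by blast
  have fD: "finite D" using PD fI finite_subset by blast
  show ?case
  proof (cases "q \<le> card D")
    case True
    then obtain S where S: "S \<subseteq> D" "card S = q" by (metis obtain_subset_with_card_n)
    have "disj x J S" using PD S(1) unfolding disj_def by blast
    moreover have "\<forall>i\<in>S. inj_on (x i) J" using inj S(1) PD by blast
    ultimately have "good x J S" by (rule disj_good)
    thus ?thesis using S PD by blast
  next
    case False
    hence cD: "card D \<le> q - 1" by simp
    have meet: "\<exists>d\<in>D. \<exists>j\<in>J. \<exists>j'\<in>J. x i j = x d j'" if i: "i \<in> I" for i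
    proof (cases "i \<in> D")
      case True then show ?thesis using Jne by blast
    next
      case False
      have "\<not> ?P (insert i D)"
      proof
        assume "?P (insert i D)"
        hence "card (insert i D) \<le> card D" using Dmax by blast
        thus False using False fD by simp
      qed
      then have "\<not> disj x J (insert i D)" using PD i by blast
      then obtain k l where kl: "k \<in> insert i D" "l \<in> insert i D" "k \<noteq> l" "x k ` J \<inter> x l ` J \<noteq> {}"
        unfolding disj_def by blast
      then obtain j1 j2 where jj: "j1 \<in> J" "j2 \<in> J" "x k j1 = x l j2" by blast
      show ?thesis
      proof (cases "k = i")
        case True
        then have "l \<in> D" using kl by auto
        then show ?thesis using jj True by blast
      next
        case False
        then have k: "k \<in> D" using kl by auto
        show ?thesis
        proof (cases "l = i")
          case True
          then show ?thesis using jj k by metis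
        next
          case False
          then have "l \<in> D" using kl by auto
          then have "x k ` J \<inter> x l ` J = {}" using PD k kl(3) unfolding disj_def by blast
          then show ?thesis using kl(4) by blast
        qed
      qed
    qed
    define B where "B = D \<times> J \<times> J"
    define f where "f i = (SOME p. p \<in> B \<and> x i (fst (snd p)) = x (fst p) (snd (snd p)))" for i
    have fprop: "f i \<in> B \<and> x i (fst (snd (f i))) = x (fst (f i)) (snd (snd (f i)))" if iI: "i \<in> I" for i
    proof -
      obtain d j j' where "d \<in> D" "j \<in> J" "j' \<in> J" "x i j = x d j'" using meet[OF iI] by blast
      then have "\<exists>p. p \<in> B \<and> x i (fst (snd p)) = x (fst p) (snd (snd p))"
        by (intro exI[of _ "(d,j,j')"]) (simp add: B_def)
      then show ?thesis unfolding f_def by (rule someI_ex)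
    qed
    have fB: "f ` I \<subseteq> B" using fprop by blast
    have finB: "finite B" using fD fJ by (simp add: B_def)
    have "card B = card D * (card J * card J)" by (simp add: B_def card_cartesian_product)
    also have "\<dots> = card D * ((n+1) * (n+1))" using cJ by simp
    also have "\<dots> \<le> (q - 1) * ((n+1) * (n+1))" using cD by (rule mult_le_mono1)
    also have "\<dots> = (q - 1) * (n+1) * (n+1)" by (simp only: mult.assoc)
    finally have cB: "card B \<le> (q - 1) * (n+1) * (n+1)" .
    have "card B * (h - 1) < card I" using arith[OF q cB hpos] cI' by linarith
    from pigeon[OF finB fB fI this] obtain b where b: "b \<in> B" "h - 1 < card {i\<in>I. f i = b}" by blast
    obtain d j j' where bdef: "b = (d, j, j')" by (cases b) auto
    have dD: "d \<in> D" and jJ: "j \<in> J" and j'J: "j' \<in> J" using b(1) bdef B_def by auto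
    define I' where "I' = {i\<in>I. f i = b}"
    define v where "v = x d j'"
    have xv: "x i j = v" if "i \<in> I'" for i
      using fprop[of i] that unfolding I'_def v_def bdef by auto
    define J' where "J' = J - {j}"
    have fJ': "finite J'" using fJ by (simp add: J'_def)
    have cJ': "card J' = n" using cJ jJ fJ by (simp add: J'_def)
    have fI': "finite I'" using fI by (simp add: I'_def)
    have cI'': "q^(n+1) * (fact n)^2 \<le> card I'" using b(2) unfolding I'_def h_def by linarith
    have inj': "\<forall>i\<in>I'. inj_on (x i) J'" using inj unfolding I'_def J'_def
      by (auto intro: inj_on_subset)
    from Suc.IH[OF fJ' cJ' fI' cI'' inj'] obtain S where S: "S \<subseteq> I'" "card S = q" "good x J' S"
      by blast
    have SI: "S \<subseteq> I" using S(1) unfolding I'_def by blast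
    have injS: "inj_on (x k) J" if "k \<in> S" for k using inj SI that by blast
    have "good x J S"
      unfolding good_def
    proof (intro conjI ballI impI)
      fix j1 assume j1: "j1 \<in> J"
      show "(\<forall>k\<in>S. \<forall>l\<in>S. x k j1 = x l j1) \<or> inj_on (\<lambda>k. x k j1) S"
      proof (cases "j1 = j")
        case True
        then show ?thesis using xv S(1) by auto
      next
        case False
        then have "j1 \<in> J'" using j1 by (simp add: J'_def)
        then show ?thesis using S(3) unfolding good_def by blast
      qed
    next
      fix j1 j2 assume j12: "j1 \<in> J" "j2 \<in> J" "j1 \<noteq> j2"
      show "(\<lambda>k. x k j1) ` S \<inter> (\<lambda>k. x k j2) ` S = {}"
      proof (rule ccontr)
        assume "(\<lambda>k. x k j1) ` S \<inter> (\<lambda>k. x k j2) ` S \<noteq> {}"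
        then obtain k l where kl: "k \<in> S" "l \<in> S" "x k j1 = x l j2" by blast
        show False
        proof (cases "j1 = j")
          case True
          have "x k j = v" "x l j = v" using xv kl(1,2) S(1) by auto
          then have "x l j = x l j2" using kl(3) True by simp
          moreover have "j \<noteq> j2" using True j12 by simp
          ultimately show False using injS[OF kl(2)] jJ j12(2) by (meson inj_onD)
        next
          case False
          note F1 = False
          show False
          proof (cases "j2 = j")
            case True
            have "x k j = v" "x l j = v" using xv kl(1,2) S(1) by auto
            then have "x k j1 = x k j" using kl(3) True by simp
            moreover have "j1 \<noteq> j" using F1 by simp
            ultimately show False using injS[OF kl(1)] jJ j12(1) by (meson inj_onD)
          next
            case False
            have "j1 \<in> J'" "j2 \<in> J'" using F1 False j12 by (auto simp: J'_def)
            then have "(\<lambda>k. x k j1) ` S \<inter> (\<lambda>k. x k j2) ` S = {}" using S(3) j12(3) unfolding good_def by blast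
            then show False using kl by blast
          qed
        qed
      qed
    qed
    then show ?thesis using SI S(2) by blast
  qed
qed


theorem lemma3p3:
  fixes V :: "'a set" and t q N :: nat and x :: "nat \<Rightarrow> nat \<Rightarrow> 'a"
  assumes "finite V"
    and "t > 0" and "q > 0"
    and "N = (fact t)^2 * q^(t+1)"
    and "\<And>i j. i < N \<Longrightarrow> j < t \<Longrightarrow> x i j \<in> V"
    and "\<And>i. i < N \<Longrightarrow> inj_on (x i) {..<t}"
  shows "\<exists>ii :: nat \<Rightarrow> nat.
           strict_mono_on {..<q} ii \<and> (\<forall>k<q. ii k < N) \<and>
           (\<forall>j<t. (\<forall>k<q. \<forall>l<q. x (ii k) j = x (ii l) j)
                   \<or> inj_on (\<lambda>k. x (ii k) j) {..<q}) \<and>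
           (\<forall>j<t. \<forall>j'<t. j \<noteq> j' \<longrightarrow>
              (\<lambda>k. x (ii k) j) ` {..<q} \<inter> (\<lambda>k. x (ii k) j') ` {..<q} = {})"
proof -
  have "\<exists>S\<subseteq>{..<N}. card S = q \<and> good x {..<t} S"
  proof (rule main[OF assms(3), of "{..<t}" t "{..<N}" x])
    show "q ^ (t + 1) * (fact t)\<^sup>2 \<le> card {..<N}" using assms(4) by (simp add: mult.commute)
    show "\<forall>i\<in>{..<N}. inj_on (x i) {..<t}" using assms(6) by blast
  qed auto
  then obtain S where S: "S \<subseteq> {..<N}" "card S = q" "good x {..<t} S" by blast
  have fS: "finite S" using S(1) finite_subset by blast
  define xs where "xs = sorted_list_of_set S"
  define ii where "ii k = xs ! k" for k
  have len: "length xs = q" using S(2) fS by (simp add: xs_def)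
  have ss: "sorted_wrt (<) xs" by (simp add: xs_def)
  have setxs: "set xs = S" using fS by (simp add: xs_def)
  have sm: "strict_mono_on {..<q} ii"
    unfolding strict_mono_on_def ii_def using ss len by (auto intro: sorted_wrt_nth_less)
  have img: "ii ` {..<q} = S"
    unfolding ii_def using setxs len by (auto simp: set_conv_nth)
  have injii: "inj_on ii {..<q}" using sm by (rule strict_mono_on_imp_inj_on)
  have imgj: "(\<lambda>k. x (ii k) j) ` {..<q} = (\<lambda>k. x k j) ` S" for j
    unfolding img[symmetric] image_image by (rule refl)
  show ?thesis
  proof (intro exI[of _ ii] conjI allI impI)
    show "strict_mono_on {..<q} ii" by (rule sm)
  next
    fix k assume "k < q"
    then have "ii k \<in> S" using img by blast
    then show "ii k < N" using S(1) by blast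
  next
    fix j assume j: "j < t"
    then have "(\<forall>k\<in>S. \<forall>l\<in>S. x k j = x l j) \<or> inj_on (\<lambda>k. x k j) S"
      using S(3) unfolding good_def by blast
    then show "(\<forall>k<q. \<forall>l<q. x (ii k) j = x (ii l) j) \<or> inj_on (\<lambda>k. x (ii k) j) {..<q}"
    proof
      assume "\<forall>k\<in>S. \<forall>l\<in>S. x k j = x l j"
      moreover have "ii k \<in> S" if "k < q" for k using img that by blast
      ultimately show ?thesis by blast
    next
      assume "inj_on (\<lambda>k. x k j) S"
      then have "inj_on (\<lambda>k. x k j) (ii ` {..<q})" using img by simp
      then have "inj_on ((\<lambda>k. x k j) \<circ> ii) {..<q}" using injii by (intro comp_inj_on)
      then show ?thesis by (simp add: o_def)
    qed
  next
    fix j j' assume "j < t" "j' < t" "j \<noteq> j'"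
    then have "(\<lambda>k. x k j) ` S \<inter> (\<lambda>k. x k j') ` S = {}"
      using S(3) unfolding good_def by blast
    then show "(\<lambda>k. x (ii k) j) ` {..<q} \<inter> (\<lambda>k. x (ii k) j') ` {..<q} = {}"
      by (simp only: imgj)
  qed
qed

end
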